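(* Let $T$ be a tree rooted at $r$, and let $Z$ be a set of vertices. Then: (a) If $\alpha(T)>\alpha(T-Z)$ and $r$ is $\alpha$-critical in $T$, then either (i) there exist two (possibly non-distinct) vertices $u,v\in Z\cap V(T)$ such that $\alpha(T)>\alpha(T-\{u,v\})$ and $r$ is $\alpha$-critical in $T-\{u,v\}$, or (ii) there exists a vertex $u\in Z\cap V(T)$ such that $\alpha(T)>\alpha(T-u)$ and $r$ is not $\alpha$-critical in $T-u$. (b) If $\alpha(T)=\alpha(T-Z)$ and $r$ is $\alpha$-critical in $T-Z$ but not in $T$, then there exists a vertex $u\in Z\cap V(T)$ such that $r$ is $\alpha$-critical in $T-u$.
   Context: $\alpha(H)$ is the independence number of a graph $H$. A vertex $v$ of $H$ is $\alpha$-critical in $H$ if it belongs to every maximum independent set of $H$, i.e. $\alpha(H) = 1+\alpha(H-v)$ (in particular $v\in V(H)$). $T-S$ denotes $T$ with the vertices of $S\cap V(T)$ and incident edges removed. *)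

theory Defs
  imports Main
begin

(* A simple graph: vertex set V, symmetric irreflexive adjacency relation E
   (E is only consulted on vertices of V). *)

definition simple_graph :: "'a set \<Rightarrow> ('a \<Rightarrow> 'a \<Rightarrow> bool) \<Rightarrow> bool" where
  "simple_graph V E \<longleftrightarrow> finite V \<and> (\<forall>x y. E x y \<longrightarrow> E y x) \<and> (\<forall>x. \<not> E x x)"

definition is_walk :: "'a set \<Rightarrow> ('a \<Rightarrow> 'a \<Rightarrow> bool) \<Rightarrow> 'a list \<Rightarrow> bool" where
  "is_walk V E p \<longleftrightarrow> p \<noteq> [] \<and> set p \<subseteq> V \<and> (\<forall>i. Suc i < length p \<longrightarrow> E (p ! i) (p ! Suc i))"

definition connected_graph :: "'a set \<Rightarrow> ('a \<Rightarrow> 'a \<Rightarrow> bool) \<Rightarrow> bool" where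
  "connected_graph V E \<longleftrightarrow> V \<noteq> {} \<and>
     (\<forall>x\<in>V. \<forall>y\<in>V. \<exists>p. is_walk V E p \<and> hd p = x \<and> last p = y)"

definition is_cycle :: "'a set \<Rightarrow> ('a \<Rightarrow> 'a \<Rightarrow> bool) \<Rightarrow> 'a list \<Rightarrow> bool" where
  "is_cycle V E c \<longleftrightarrow> is_walk V E c \<and> distinct c \<and> length c \<ge> 3 \<and> E (last c) (hd c)"

definition is_tree :: "'a set \<Rightarrow> ('a \<Rightarrow> 'a \<Rightarrow> bool) \<Rightarrow> bool" where
  "is_tree V E \<longleftrightarrow> simple_graph V E \<and> connected_graph V E \<and> (\<nexists>c. is_cycle V E c)"

definition independent_set :: "'a set \<Rightarrow> ('a \<Rightarrow> 'a \<Rightarrow> bool) \<Rightarrow> 'a set \<Rightarrow> bool" where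
  "independent_set V E S \<longleftrightarrow> S \<subseteq> V \<and> (\<forall>x\<in>S. \<forall>y\<in>S. \<not> E x y)"

(* independence number of the graph induced on V (V finite) *)
definition alpha :: "'a set \<Rightarrow> ('a \<Rightarrow> 'a \<Rightarrow> bool) \<Rightarrow> nat" where
  "alpha V E = Max (card ` {S. independent_set V E S})"

definition alpha_critical :: "'a set \<Rightarrow> ('a \<Rightarrow> 'a \<Rightarrow> bool) \<Rightarrow> 'a \<Rightarrow> bool" where
  "alpha_critical V E v \<longleftrightarrow> v \<in> V \<and> alpha V E = 1 + alpha (V - {v}) E"

end

theory Submission
  imports Defs
begin

lemma indep_card_le:
  assumes "finite W" "independent_set W E S"
  shows "card S \<le> alpha W E"
proof -
  have "{S. independent_set W E S} \<subseteq> Pow W" unfolding independent_set_def by auto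
  then have "finite {S. independent_set W E S}" using assms(1) finite_subset by blast
  then show ?thesis unfolding alpha_def using assms(2) by (intro Max_ge) auto
qed

lemma alpha_attained:
  assumes "finite W"
  shows "\<exists>S. independent_set W E S \<and> card S = alpha W E"
proof -
  have "{S. independent_set W E S} \<subseteq> Pow W" unfolding independent_set_def by auto
  then have f: "finite {S. independent_set W E S}" using assms(1) finite_subset by blast
  have "independent_set W E {}" unfolding independent_set_def by auto
  then have "card ` {S. independent_set W E S} \<noteq> {}" by auto
  then have "alpha W E \<in> card ` {S. independent_set W E S}"
    unfolding alpha_def using f by (intro Max_in) auto
  then show ?thesis by auto
qed

lemma indep_mono:
  "independent_set W E S \<Longrightarrow> S \<subseteq> W' \<Longrightarrow> independent_set W' E S"
  unfolding independent_set_def by auto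

lemma indep_sub: "independent_set W E S \<Longrightarrow> S \<subseteq> W"
  unfolding independent_set_def by auto

lemma indep_mono2: "independent_set W E S \<Longrightarrow> W \<subseteq> W' \<Longrightarrow> independent_set W' E S"
  unfolding independent_set_def by auto

lemma indep_diff: "independent_set W E S \<Longrightarrow> S \<inter> D = {} \<Longrightarrow> independent_set (W - D) E S"
  unfolding independent_set_def by auto

lemma alpha_mono:
  assumes "finite W'" "W \<subseteq> W'"
  shows "alpha W E \<le> alpha W' E"
proof -
  from alpha_attained[OF finite_subset[OF assms(2,1)]] obtain S where
    S: "independent_set W E S" "card S = alpha W E" by blast
  have "independent_set W' E S" using indep_mono2[OF S(1) assms(2)] .
  then show ?thesis using indep_card_le[OF assms(1)] S(2) by fastforce
qed

lemma alpha_remove: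
  assumes "finite W"
  shows "alpha W E \<le> alpha (W - {x}) E + 1"
proof -
  from alpha_attained[OF assms] obtain S where
    S: "independent_set W E S" "card S = alpha W E" by blast
  have "independent_set (W - {x}) E (S - {x})" using S(1) unfolding independent_set_def by auto
  then have "card (S - {x}) \<le> alpha (W - {x}) E" using indep_card_le assms by blast
  moreover have "card S \<le> card (S - {x}) + 1"
  proof -
    have "finite S" using S(1) assms finite_subset unfolding independent_set_def by blast
    then show ?thesis by (cases "x \<in> S") (simp_all add: card_Diff_singleton)
  qed
  ultimately show ?thesis using S(2) by linarith
qed

section \<open>Meets and joins of maximum independent sets in bipartite graphs\<close>

definition meetS :: "'a set \<Rightarrow> 'a set \<Rightarrow> 'a set \<Rightarrow> 'a set" where
  "meetS A X Y = (X \<inter> Y \<inter> A) \<union> ((X \<union> Y) - A)"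

definition joinS :: "'a set \<Rightarrow> 'a set \<Rightarrow> 'a set \<Rightarrow> 'a set" where
  "joinS A X Y = ((X \<union> Y) \<inter> A) \<union> (X \<inter> Y - A)"

lemma meet_join_good:
  assumes bip: "\<forall>x\<in>V. \<forall>y\<in>V. E x y \<longrightarrow> (x \<in> A \<longleftrightarrow> y \<notin> A)"
    and WV: "W \<subseteq> V" and fW: "finite W"
    and X: "independent_set W E X" "card X = alpha W E"
    and Y: "independent_set W E Y" "card Y = alpha W E"
  shows "independent_set W E (meetS A X Y) \<and> card (meetS A X Y) = alpha W E
       \<and> independent_set W E (joinS A X Y) \<and> card (joinS A X Y) = alpha W E"
proof -
  have XW: "X \<subseteq> W" and YW: "Y \<subseteq> W" using X Y unfolding independent_set_def by auto
  have fX: "finite X" and fY: "finite Y" using XW YW fW finite_subset by auto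
  have iX: "\<And>p q. p \<in> X \<Longrightarrow> q \<in> X \<Longrightarrow> \<not> E p q"
    and iY: "\<And>p q. p \<in> Y \<Longrightarrow> q \<in> Y \<Longrightarrow> \<not> E p q"
    using X(1) Y(1) unfolding independent_set_def by auto
  have b: "\<And>p q. p \<in> W \<Longrightarrow> q \<in> W \<Longrightarrow> E p q \<Longrightarrow> (p \<in> A \<longleftrightarrow> q \<notin> A)"
    using bip WV by blast
  have im: "independent_set W E (meetS A X Y)"
    unfolding independent_set_def
  proof (intro conjI ballI)
    show "meetS A X Y \<subseteq> W" using XW YW unfolding meetS_def by auto
    fix p q assume p: "p \<in> meetS A X Y" and q: "q \<in> meetS A X Y"
    have pq: "p \<in> W" "q \<in> W" using p q XW YW unfolding meetS_def by auto
    show "\<not> E p q"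
    proof
      assume e: "E p q"
      note bb = b[OF pq e]
      show False using p q iX[of p q] iY[of p q] bb e unfolding meetS_def by auto
    qed
  qed
  have ij: "independent_set W E (joinS A X Y)"
    unfolding independent_set_def
  proof (intro conjI ballI)
    show "joinS A X Y \<subseteq> W" using XW YW unfolding joinS_def by auto
    fix p q assume p: "p \<in> joinS A X Y" and q: "q \<in> joinS A X Y"
    have pq: "p \<in> W" "q \<in> W" using p q XW YW unfolding joinS_def by auto
    show "\<not> E p q"
    proof
      assume e: "E p q"
      note bb = b[OF pq e]
      show False using p q iX[of p q] iY[of p q] bb e unfolding joinS_def by auto
    qed
  qed
  have c1: "card (meetS A X Y) = card (X \<inter> Y \<inter> A) + card ((X \<union> Y) - A)"
    unfolding meetS_def by (rule card_Un_disjoint) (use fX fY in auto)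
  have c2: "card (joinS A X Y) = card ((X \<union> Y) \<inter> A) + card (X \<inter> Y - A)"
    unfolding joinS_def by (rule card_Un_disjoint) (use fX fY in auto)
  have c3: "card (X \<inter> Y) = card (X \<inter> Y \<inter> A) + card (X \<inter> Y - A)"
  proof -
    have "X \<inter> Y = (X \<inter> Y \<inter> A) \<union> (X \<inter> Y - A)" by auto
    then show ?thesis by (metis card_Un_disjoint Diff_disjoint Int_Diff finite_Int fX inf_commute
          inf.cobounded1 finite_subset)
  qed
  have c4: "card (X \<union> Y) = card ((X \<union> Y) \<inter> A) + card ((X \<union> Y) - A)"
  proof -
    have "X \<union> Y = ((X \<union> Y) \<inter> A) \<union> ((X \<union> Y) - A)" by auto
    then show ?thesis by (metis card_Un_disjoint Diff_disjoint Int_Diff finite_Un fX fY inf_commute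
          inf.cobounded1 finite_subset)
  qed
  have c5: "card X + card Y = card (X \<union> Y) + card (X \<inter> Y)"
    using card_Un_Int[OF fX fY] .
  have l1: "card (meetS A X Y) \<le> alpha W E" using indep_card_le[OF fW im] .
  have l2: "card (joinS A X Y) \<le> alpha W E" using indep_card_le[OF fW ij] .
  show ?thesis using im ij l1 l2 c1 c2 c3 c4 c5 X(2) Y(2) by linarith
qed


lemma M_meet:
  assumes bip: "\<forall>x\<in>V. \<forall>y\<in>V. E x y \<longrightarrow> (x \<in> A \<longleftrightarrow> y \<notin> A)"
    and WV: "W \<subseteq> V" and fW: "finite W"
    and X0: "independent_set W E X0" "card X0 = alpha W E" "X0 \<inter> C = {}"
  shows "finite D \<Longrightarrow> D \<subseteq> A \<Longrightarrow>
     (\<forall>w\<in>D. \<exists>X. independent_set W E X \<and> card X = alpha W E \<and> w \<notin> X \<and> X \<inter> C = {}) \<Longrightarrow>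
     \<exists>X. independent_set W E X \<and> card X = alpha W E \<and> X \<inter> (C \<union> D) = {}"
proof (induction D rule: finite_induct)
  case empty
  then show ?case using X0 by auto
next
  case (insert w D)
  then obtain X where X: "independent_set W E X" "card X = alpha W E" "X \<inter> (C \<union> D) = {}"
    by auto
  from insert.prems obtain Y where Y: "independent_set W E Y" "card Y = alpha W E" "w \<notin> Y"
    "Y \<inter> C = {}" by auto
  have g: "independent_set W E (meetS A X Y) \<and> card (meetS A X Y) = alpha W E"
    using meet_join_good[OF bip WV fW X(1,2) Y(1,2)] by blast
  have "meetS A X Y \<inter> (C \<union> insert w D) = {}"
    using X(3) Y(3,4) insert.prems(1) unfolding meetS_def by blast
  then show ?case using g by blast
qed

lemma M_join:
  assumes bip: "\<forall>x\<in>V. \<forall>y\<in>V. E x y \<longrightarrow> (x \<in> A \<longleftrightarrow> y \<notin> A)"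
    and WV: "W \<subseteq> V" and fW: "finite W"
    and X0: "independent_set W E X0" "card X0 = alpha W E" "X0 \<inter> (C \<union> C') = {}"
    and C': "C' \<inter> A = {}"
  shows "finite D \<Longrightarrow> D \<inter> A = {} \<Longrightarrow>
     (\<forall>w\<in>D. \<exists>X. independent_set W E X \<and> card X = alpha W E \<and> w \<notin> X \<and> X \<inter> C = {}) \<Longrightarrow>
     \<exists>X. independent_set W E X \<and> card X = alpha W E \<and> X \<inter> (C \<union> C' \<union> D) = {}"
proof (induction D rule: finite_induct)
  case empty
  then show ?case using X0 by auto
next
  case (insert w D)
  then obtain X where X: "independent_set W E X" "card X = alpha W E" "X \<inter> (C \<union> C' \<union> D) = {}"
    by auto
  from insert.prems obtain Y where Y: "independent_set W E Y" "card Y = alpha W E" "w \<notin> Y"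
    "Y \<inter> C = {}" by auto
  have g: "independent_set W E (joinS A X Y) \<and> card (joinS A X Y) = alpha W E"
    using meet_join_good[OF bip WV fW X(1,2) Y(1,2)] by blast
  have "joinS A X Y \<inter> (C \<union> C' \<union> insert w D) = {}"
    using X(3) Y(3,4) insert.prems(1) C' unfolding joinS_def by blast
  then show ?case using g by blast
qed

section \<open>Forests are bipartite\<close>

lemma walk_mono: "is_walk V E p \<Longrightarrow> V \<subseteq> V' \<Longrightarrow> is_walk V' E p"
  unfolding is_walk_def by auto

lemma cycle_mono: "is_cycle V E p \<Longrightarrow> V \<subseteq> V' \<Longrightarrow> is_cycle V' E p"
  unfolding is_cycle_def using walk_mono by blast

lemma leaf_exists:
  assumes fin: "finite V" and irr: "\<forall>x. \<not> E x x" and acyc: "\<nexists>c. is_cycle V E c"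
    and ne: "V \<noteq> {}"
  shows "\<exists>x\<in>V. \<forall>y\<in>V. \<forall>z\<in>V. E x y \<longrightarrow> E x z \<longrightarrow> y = z"
proof -
  define P where "P = {p. is_walk V E p \<and> distinct p}"
  have len: "length p \<le> card V" if "p \<in> P" for p
  proof -
    have "set p \<subseteq> V" "distinct p" using that unfolding P_def is_walk_def by auto
    then have "card (set p) \<le> card V" using card_mono[OF fin] by blast
    then show ?thesis using distinct_card[OF \<open>distinct p\<close>] by simp
  qed
  obtain v where v: "v \<in> V" using ne by auto
  have "[v] \<in> P" unfolding P_def is_walk_def using v by auto
  have "length ` P \<subseteq> {..card V}" using len by auto
  then have fL: "finite (length ` P)" by (rule finite_subset) simp
  have neL: "length ` P \<noteq> {}" using \<open>[v] \<in> P\<close> by auto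
  obtain p where pP: "p \<in> P" and pmax: "length p = Max (length ` P)"
    using Max_in[OF fL neL] by auto
  have maxle: "length q \<le> length p" if "q \<in> P" for q
    using Max_ge[OF fL] that pmax by auto
  have pw: "is_walk V E p" and pd: "distinct p" using pP unfolding P_def by auto
  have pne: "p \<noteq> []" and pV: "set p \<subseteq> V"
    and padj: "\<And>i. Suc i < length p \<Longrightarrow> E (p ! i) (p ! Suc i)"
    using pw unfolding is_walk_def by auto
  define x where "x = last p"
  have xV: "x \<in> V" using pne pV unfolding x_def by auto
  have xl: "x = p ! (length p - 1)" unfolding x_def using pne by (simp add: last_conv_nth)
  have inset: "y \<in> set p" if "y \<in> V" "E x y" for y
  proof (rule ccontr)
    assume yn: "y \<notin> set p"
    have "p @ [y] \<in> P"
      unfolding P_def is_walk_def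
    proof (intro CollectI conjI allI impI)
      show "p @ [y] \<noteq> []" by simp
      show "set (p @ [y]) \<subseteq> V" using pV that by auto
      show "distinct (p @ [y])" using pd yn by auto
      fix i assume i: "Suc i < length (p @ [y])"
      show "E ((p @ [y]) ! i) ((p @ [y]) ! Suc i)"
      proof (cases "Suc i < length p")
        case True
        then show ?thesis using padj[OF True] by (simp add: nth_append)
      next
        case False
        then have "Suc i = length p" using i by simp
        then have ii: "i = length p - 1" by simp
        have "(p @ [y]) ! i = x" "(p @ [y]) ! Suc i = y"
          using xl ii \<open>Suc i = length p\<close> by (simp_all add: nth_append)
        then show ?thesis using that by simp
      qed
    qed
    then show False using maxle[of "p @ [y]"] by simp
  qed
  have nocyc: False if "i < length p - 2" "E x (p ! i)" for i
  proof -
    have "is_cycle V E (drop i p)"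
      unfolding is_cycle_def is_walk_def
    proof (intro conjI allI impI)
      show "drop i p \<noteq> []" using that by simp
      show "set (drop i p) \<subseteq> V" using pV set_drop_subset[of i p] by (rule order_trans[rotated])
      show "distinct (drop i p)" using pd by simp
      show "3 \<le> length (drop i p)" using that by simp
      fix k assume "Suc k < length (drop i p)"
      then have "Suc (i + k) < length p" by simp
      then show "E (drop i p ! k) (drop i p ! Suc k)" using padj by simp
    next
      have "last (drop i p) = x" unfolding x_def using that by (simp add: last_drop)
      moreover have "hd (drop i p) = p ! i" using that by (simp add: hd_drop_conv_nth)
      ultimately show "E (last (drop i p)) (hd (drop i p))" using that by simp
    qed
    then show False using acyc by blast
  qed
  have idx: "\<exists>i. i < length p - 1 \<and> p ! i = y" if yh: "y \<in> V" "E x y" for y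
  proof -
    have "y \<in> set p" using inset[OF yh] .
    then obtain i where i: "i < length p" "p ! i = y" by (metis in_set_conv_nth)
    have "y \<noteq> x" using yh irr by auto
    then have "i \<noteq> length p - 1" using i xl by auto
    then show ?thesis using i by (intro exI[of _ i]) auto
  qed
  have "\<forall>y\<in>V. \<forall>z\<in>V. E x y \<longrightarrow> E x z \<longrightarrow> y = z"
  proof (intro ballI impI)
    fix y z assume yz: "y \<in> V" "z \<in> V" "E x y" "E x z"
    obtain i where i: "i < length p - 1" "p ! i = y" using idx yz by blast
    obtain j where j: "j < length p - 1" "p ! j = z" using idx yz by blast
    show "y = z"
    proof (rule ccontr)
      assume "y \<noteq> z"
      then have "i \<noteq> j" using i j by auto
      then have "i < length p - 2 \<or> j < length p - 2" using i j by linarith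
      then show False
      proof
        assume "i < length p - 2" then show False using nocyc[of i] i yz by simp
      next
        assume "j < length p - 2" then show False using nocyc[of j] j yz by simp
      qed
    qed
  qed
  then show ?thesis using xV by blast
qed

lemma forest_bipartite:
  assumes "finite V" "\<forall>x y. E x y \<longrightarrow> E y x" "\<forall>x. \<not> E x x" "\<nexists>c. is_cycle V E c"
  shows "\<exists>A. \<forall>x\<in>V. \<forall>y\<in>V. E x y \<longrightarrow> (x \<in> A \<longleftrightarrow> y \<notin> A)"
  using assms
proof (induction "card V" arbitrary: V rule: less_induct)
  case less
  show ?case
  proof (cases "V = {}")
    case True
    then show ?thesis by auto
  next
    case False
    obtain x where xV: "x \<in> V" and leaf: "\<forall>y\<in>V. \<forall>z\<in>V. E x y \<longrightarrow> E x z \<longrightarrow> y = z"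
      using leaf_exists[OF less.prems(1,3,4) False] by blast
    have ac: "\<nexists>c. is_cycle (V - {x}) E c" using less.prems(4) cycle_mono[of "V - {x}" E _ V] by blast
    have cl: "card (V - {x}) < card V" using card_Diff1_less[OF less.prems(1) xV] .
    have fx: "finite (V - {x})" using less.prems(1) by simp
    obtain A' where A': "\<forall>p\<in>V - {x}. \<forall>q\<in>V - {x}. E p q \<longrightarrow> (p \<in> A' \<longleftrightarrow> q \<notin> A')"
      using less.hyps[OF cl fx less.prems(2,3) ac] by blast
    show ?thesis
    proof (cases "\<exists>y\<in>V. E x y")
      case True
      then obtain y where y: "y \<in> V" "E x y" by blast
      have yx: "y \<noteq> x" using y less.prems(3) by auto
      define A where "A = (if y \<in> A' then A' - {x} else insert x A')"
      have "\<forall>p\<in>V. \<forall>q\<in>V. E p q \<longrightarrow> (p \<in> A \<longleftrightarrow> q \<notin> A)"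
      proof (intro ballI impI)
        fix p q assume pq: "p \<in> V" "q \<in> V" "E p q"
        show "p \<in> A \<longleftrightarrow> q \<notin> A"
        proof (cases "p = x")
          case True
          then have "q = y" using leaf pq y by blast
          then show ?thesis using True yx unfolding A_def by auto
        next
          case False
          show ?thesis
          proof (cases "q = x")
            case True
            then have "E x p" using pq less.prems(2) by blast
            then have "p = y" using leaf pq y by blast
            then show ?thesis using True yx unfolding A_def by auto
          next
            case False
            then show ?thesis using \<open>p \<noteq> x\<close> A' pq unfolding A_def by auto
          qed
        qed
      qed
      then show ?thesis by blast
    next
      case False
      have "\<forall>p\<in>V. \<forall>q\<in>V. E p q \<longrightarrow> (p \<in> A' - {x} \<longleftrightarrow> q \<notin> A' - {x})"
      proof (intro ballI impI)
        fix p q assume pq: "p \<in> V" "q \<in> V" "E p q"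
        have "p \<noteq> x" using False pq by blast
        moreover have "q \<noteq> x" using False pq less.prems(2) by blast
        ultimately show "p \<in> A' - {x} \<longleftrightarrow> q \<notin> A' - {x}" using A' pq by auto
      qed
      then show ?thesis by blast
    qed
  qed
qed

lemma partB:
  assumes fin: "finite V"
    and bip: "\<forall>x\<in>V. \<forall>y\<in>V. E x y \<longrightarrow> (x \<in> A \<longleftrightarrow> y \<notin> A)"
    and rA: "r \<in> A"
    and h1: "alpha V E = alpha (V - Z) E" and h2: "alpha_critical (V - Z) E r"
    and h3: "\<not> alpha_critical V E r"
  shows "\<exists>u\<in>Z \<inter> V. alpha_critical (V - {u}) E r"
proof (rule ccontr)
  assume neg: "\<not> (\<exists>u\<in>Z \<inter> V. alpha_critical (V - {u}) E r)"
  define \<alpha> where "\<alpha> = alpha V E"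
  have rVZ: "r \<in> V - Z" and hcr: "alpha (V - Z) E = 1 + alpha (V - Z - {r}) E"
    using h2 unfolding alpha_critical_def by auto
  have rV: "r \<in> V" using rVZ by auto
  have fVZ: "finite (V - Z)" using fin by auto
  obtain Y where Y: "independent_set (V - Z) E Y" "card Y = alpha (V - Z) E"
    using alpha_attained[OF fVZ] by blast
  have YV: "independent_set V E Y" by (rule indep_mono2[OF Y(1)]) auto
  have YZ: "Y \<inter> Z = {}" using Y(1) unfolding independent_set_def by auto
  have Ya: "card Y = \<alpha>" using Y(2) h1 \<alpha>_def by simp
  have drop: "\<exists>S. independent_set V E S \<and> card S = \<alpha> \<and> S \<inter> ({r} \<union> {u}) = {}"
    if u: "u \<in> Z \<inter> V" for u
  proof -
    have f1: "finite (V - {u})" using fin by auto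
    have "independent_set (V - {u}) E Y" using u by (intro indep_mono2[OF Y(1)]) auto
    then have "\<alpha> \<le> alpha (V - {u}) E" using indep_card_le[OF f1] Ya by fastforce
    moreover have "alpha (V - {u}) E \<le> \<alpha>" unfolding \<alpha>_def by (rule alpha_mono[OF fin]) auto
    ultimately have a1: "alpha (V - {u}) E = \<alpha>" by simp
    have "r \<in> V - {u}" using rVZ u by auto
    moreover have "\<not> alpha_critical (V - {u}) E r" using neg u by blast
    ultimately have nc: "alpha (V - {u}) E \<noteq> 1 + alpha (V - {u} - {r}) E"
      unfolding alpha_critical_def by blast
    have "alpha (V - {u}) E \<le> alpha (V - {u} - {r}) E + 1" using alpha_remove[OF f1] .
    moreover have "alpha (V - {u} - {r}) E \<le> alpha (V - {u}) E" by (rule alpha_mono[OF f1]) auto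
    ultimately have a2: "alpha (V - {u} - {r}) E = \<alpha>" using nc a1 by linarith
    obtain S where S: "independent_set (V - {u} - {r}) E S" "card S = alpha (V - {u} - {r}) E"
      using alpha_attained[of "V - {u} - {r}"] fin by auto
    have "independent_set V E S" by (rule indep_mono2[OF S(1)]) auto
    moreover have "S \<inter> ({r} \<union> {u}) = {}" using S(1) unfolding independent_set_def by auto
    ultimately show ?thesis using S(2) a2 by blast
  qed
  have "\<exists>S. independent_set V E S \<and> card S = \<alpha> \<and> S \<inter> ({r} \<union> {}) = {}"
  proof -
    have nc: "alpha V E \<noteq> 1 + alpha (V - {r}) E" using h3 rV unfolding alpha_critical_def by auto
    have "alpha V E \<le> alpha (V - {r}) E + 1" using alpha_remove[OF fin] .
    moreover have "alpha (V - {r}) E \<le> alpha V E" by (rule alpha_mono[OF fin]) auto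
    ultimately have a2: "alpha (V - {r}) E = \<alpha>" using nc \<alpha>_def by linarith
    obtain S where S: "independent_set (V - {r}) E S" "card S = alpha (V - {r}) E"
      using alpha_attained[of "V - {r}"] fin by auto
    have "independent_set V E S" by (rule indep_mono2[OF S(1)]) auto
    moreover have "S \<inter> ({r} \<union> {}) = {}" using S(1) unfolding independent_set_def by auto
    ultimately show ?thesis using S(2) a2 by blast
  qed
  then obtain S0 where S0: "independent_set V E S0" "card S0 = alpha V E" "S0 \<inter> ({r} \<union> {}) = {}"
    unfolding \<alpha>_def by blast
  have "\<exists>X. independent_set V E X \<and> card X = alpha V E \<and> X \<inter> ({r} \<union> {} \<union> (Z \<inter> V - A)) = {}"
  proof (rule M_join[OF bip subset_refl fin S0])
    show "{} \<inter> A = {}" by simp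
    show "finite (Z \<inter> V - A)" using fin by auto
    show "(Z \<inter> V - A) \<inter> A = {}" by auto
    show "\<forall>w\<in>Z \<inter> V - A. \<exists>X. independent_set V E X \<and> card X = alpha V E \<and> w \<notin> X \<and> X \<inter> {r} = {}"
      using drop unfolding \<alpha>_def by blast
  qed
  then obtain P where P: "independent_set V E P" "card P = alpha V E"
    "P \<inter> ({r} \<union> {} \<union> (Z \<inter> V - A)) = {}" by blast
  have M: "independent_set V E (meetS A Y P) \<and> card (meetS A Y P) = alpha V E"
    using meet_join_good[OF bip subset_refl fin YV _ P(1,2)] Ya \<alpha>_def by blast
  have PV: "P \<subseteq> V" using P(1) unfolding independent_set_def by auto
  have "meetS A Y P \<inter> (Z \<union> {r}) = {}"
    using YZ P(3) PV rA unfolding meetS_def by blast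
  then have "independent_set (V - (Z \<union> {r})) E (meetS A Y P)"
    using M indep_diff by blast
  moreover have "V - (Z \<union> {r}) = V - Z - {r}" by auto
  ultimately have "independent_set (V - Z - {r}) E (meetS A Y P)" by simp
  then have "card (meetS A Y P) \<le> alpha (V - Z - {r}) E" using indep_card_le fin by blast
  then show False using M hcr h1 by linarith
qed

lemma partA:
  assumes fin: "finite V"
    and bip: "\<forall>x\<in>V. \<forall>y\<in>V. E x y \<longrightarrow> (x \<in> A \<longleftrightarrow> y \<notin> A)"
    and rA: "r \<in> A" and sym: "\<forall>x y. E x y \<longrightarrow> E y x" and irr: "\<forall>x. \<not> E x x"
    and h1: "alpha V E > alpha (V - Z) E" and h2: "alpha_critical V E r"
  shows "(\<exists>u\<in>Z \<inter> V. \<exists>v\<in>Z \<inter> V. alpha V E > alpha (V - {u, v}) E \<and> alpha_critical (V - {u, v}) E r)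
          \<or> (\<exists>u\<in>Z \<inter> V. alpha V E > alpha (V - {u}) E \<and> \<not> alpha_critical (V - {u}) E r)"
proof (rule ccontr)
  assume neg: "\<not> ?thesis"
  define \<alpha> where "\<alpha> = alpha V E"
  have rV: "r \<in> V" and hcr: "\<alpha> = 1 + alpha (V - {r}) E"
    using h2 unfolding alpha_critical_def \<alpha>_def by auto
  have single: "alpha (V - {u}) E = \<alpha>" if u: "u \<in> Z \<inter> V" for u
  proof -
    have "\<not> (\<alpha> > alpha (V - {u, u}) E \<and> alpha_critical (V - {u, u}) E r)"
      using neg u unfolding \<alpha>_def by blast
    moreover have "\<not> (\<alpha> > alpha (V - {u}) E \<and> \<not> alpha_critical (V - {u}) E r)"
      using neg u unfolding \<alpha>_def by blast
    ultimately have "\<not> \<alpha> > alpha (V - {u}) E" by auto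
    moreover have "alpha (V - {u}) E \<le> \<alpha>" unfolding \<alpha>_def by (rule alpha_mono[OF fin]) auto
    ultimately show ?thesis by simp
  qed
  have rZ: "r \<notin> Z"
  proof
    assume "r \<in> Z"
    then have "alpha (V - {r}) E = \<alpha>" using single rV by blast
    then show False using hcr by simp
  qed
  define W where "W = V - {r}"
  define k where "k = alpha W E"
  have ak: "\<alpha> = k + 1" using hcr unfolding k_def W_def by simp
  have fW: "finite W" and WV: "W \<subseteq> V" using fin unfolding W_def by auto
  define N where "N = {y \<in> V. E r y}"
  have NA: "N \<inter> A = {}"
  proof -
    have "y \<notin> A" if "y \<in> V" "E r y" for y using bip rV rA that by blast
    then show ?thesis unfolding N_def by blast
  qed
  have lift: "independent_set W E (S - {r}) \<and> card (S - {r}) = k \<and> (S - {r}) \<inter> (N \<union> (V - V')) = {}"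
    if V': "V' \<subseteq> V" and S: "independent_set V' E S" "card S = \<alpha>" for V' S
  proof -
    have SV: "S \<subseteq> V'" using S(1) unfolding independent_set_def by auto
    have fS: "finite S" by (rule finite_subset[OF SV finite_subset[OF V' fin]])
    have rS: "r \<in> S"
    proof (rule ccontr)
      assume "r \<notin> S"
      then have "S \<subseteq> W" using SV V' unfolding W_def by auto
      then have "independent_set W E S" using indep_mono[OF S(1)] by blast
      then have "card S \<le> k" unfolding k_def by (rule indep_card_le[OF fW])
      then show False using S(2) ak by simp
    qed
    have "S - {r} \<subseteq> W" using SV V' unfolding W_def by auto
    then have i1: "independent_set W E (S - {r})" using S(1) unfolding independent_set_def by blast
    have c1: "card (S - {r}) = k" using S(2) rS ak fS by simp
    have "(S - {r}) \<inter> N = {}" using S(1) rS unfolding N_def independent_set_def by blast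
    moreover have "(S - {r}) \<inter> (V - V') = {}" using SV by blast
    ultimately show ?thesis using i1 c1 by blast
  qed
  have uno: "\<exists>X. independent_set W E X \<and> card X = k \<and> u \<notin> X \<and> X \<inter> N = {}"
    if u: "u \<in> Z \<inter> V" for u
  proof -
    have f1: "finite (V - {u})" using fin by auto
    obtain S where S: "independent_set (V - {u}) E S" "card S = alpha (V - {u}) E"
      using alpha_attained[OF f1] by blast
    have "independent_set W E (S - {r}) \<and> card (S - {r}) = k \<and> (S - {r}) \<inter> (N \<union> (V - (V - {u}))) = {}"
      using lift[of "V - {u}" S] S single[OF u] by blast
    then show ?thesis using u by blast
  qed
  have duo: "\<exists>X. independent_set W E X \<and> card X = k \<and> u \<notin> X \<and> X \<inter> {v} = {}"
    if u: "u \<in> Z \<inter> V" and v: "v \<in> Z \<inter> V" for u v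
  proof -
    define V2 where "V2 = V - {u, v}"
    have f1: "finite (V - {u})" and f2: "finite V2" using fin unfolding V2_def by auto
    have V2eq: "V - {u} - {v} = V2" unfolding V2_def by auto
    have ge: "\<alpha> \<le> alpha V2 E + 1" using alpha_remove[OF f1, of E v] single[OF u] V2eq by simp
    have le: "alpha V2 E \<le> \<alpha>" unfolding \<alpha>_def V2_def by (rule alpha_mono[OF fin]) auto
    show ?thesis
    proof (cases "alpha V2 E = \<alpha>")
      case True
      obtain S where S: "independent_set V2 E S" "card S = alpha V2 E"
        using alpha_attained[OF f2] by blast
      have "independent_set W E (S - {r}) \<and> card (S - {r}) = k \<and> (S - {r}) \<inter> (N \<union> (V - V2)) = {}"
        using lift[of V2 S] S True V2_def by blast
      then show ?thesis using u v unfolding V2_def by blast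
    next
      case False
      then have lt: "\<alpha> > alpha V2 E" using le by simp
      have "\<not> alpha_critical V2 E r" using neg u v lt unfolding \<alpha>_def V2_def by blast
      moreover have "r \<in> V2" using rV rZ u v unfolding V2_def by auto
      ultimately have nc: "alpha V2 E \<noteq> 1 + alpha (V2 - {r}) E" unfolding alpha_critical_def by auto
      have "alpha V2 E \<le> alpha (V2 - {r}) E + 1" using alpha_remove[OF f2] .
      moreover have "alpha (V2 - {r}) E \<le> alpha V2 E" by (rule alpha_mono[OF f2]) auto
      ultimately have a2: "alpha (V2 - {r}) E = k" using nc ge lt ak by linarith
      obtain S where S: "independent_set (V2 - {r}) E S" "card S = alpha (V2 - {r}) E"
        using alpha_attained[of "V2 - {r}"] f2 by auto
      have "V2 - {r} \<subseteq> W" unfolding W_def V2_def by auto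
      then have "independent_set W E S" using indep_mono2[OF S(1)] by blast
      moreover have "u \<notin> S" "S \<inter> {v} = {}" using S(1) unfolding independent_set_def V2_def by auto
      ultimately show ?thesis using S(2) a2 by blast
    qed
  qed
  define Za where "Za = Z \<inter> V \<inter> A"
  define Zb where "Zb = Z \<inter> V - A"
  have fZa: "finite Za" and fZb: "finite Zb" using fin unfolding Za_def Zb_def by auto
  obtain S0 where S0: "independent_set V E S0" "card S0 = alpha V E" using alpha_attained[OF fin] by blast
  have X0: "independent_set W E (S0 - {r}) \<and> card (S0 - {r}) = k \<and> (S0 - {r}) \<inter> (N \<union> (V - V)) = {}"
    using lift[of V S0] S0 \<alpha>_def by blast
  have kW: "k = alpha W E" using k_def .
  have "\<exists>X. independent_set W E X \<and> card X = alpha W E \<and> X \<inter> (N \<union> Za) = {}"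
  proof (rule M_meet[OF bip WV fW])
    show "independent_set W E (S0 - {r})" "card (S0 - {r}) = alpha W E" "(S0 - {r}) \<inter> N = {}"
      using X0 kW by auto
    show "finite Za" "Za \<subseteq> A" using fZa unfolding Za_def by auto
    show "\<forall>w\<in>Za. \<exists>X. independent_set W E X \<and> card X = alpha W E \<and> w \<notin> X \<and> X \<inter> N = {}"
      using uno kW unfolding Za_def by blast
  qed
  then obtain K where K: "independent_set W E K" "card K = alpha W E" "K \<inter> (N \<union> Za) = {}" by blast
  have Yz: "\<exists>X. independent_set W E X \<and> card X = alpha W E \<and> z \<notin> X \<and> X \<inter> Za = {}"
    if z: "z \<in> Zb" for z
  proof -
    have zZ: "z \<in> Z \<inter> V" using z unfolding Zb_def by auto
    obtain X1 where X1: "independent_set W E X1" "card X1 = k" "z \<notin> X1"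
      using uno[OF zZ] by blast
    have "\<exists>X. independent_set W E X \<and> card X = alpha W E \<and> X \<inter> ({z} \<union> Za) = {}"
    proof (rule M_meet[OF bip WV fW])
      show "independent_set W E X1" "card X1 = alpha W E" "X1 \<inter> {z} = {}"
        using X1 kW by auto
      show "finite Za" "Za \<subseteq> A" using fZa unfolding Za_def by auto
      show "\<forall>w\<in>Za. \<exists>X. independent_set W E X \<and> card X = alpha W E \<and> w \<notin> X \<and> X \<inter> {z} = {}"
        using duo zZ kW unfolding Za_def by blast
    qed
    then show ?thesis by blast
  qed
  have "\<exists>X. independent_set W E X \<and> card X = alpha W E \<and> X \<inter> (Za \<union> N \<union> Zb) = {}"
  proof (rule M_join[OF bip WV fW])
    show "independent_set W E K" "card K = alpha W E" "K \<inter> (Za \<union> N) = {}" using K by auto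
    show "N \<inter> A = {}" using NA .
    show "finite Zb" "Zb \<inter> A = {}" using fZb unfolding Zb_def by auto
    show "\<forall>w\<in>Zb. \<exists>X. independent_set W E X \<and> card X = alpha W E \<and> w \<notin> X \<and> X \<inter> Za = {}"
      using Yz by blast
  qed
  then obtain X where X: "independent_set W E X" "card X = k" "X \<inter> (Za \<union> N \<union> Zb) = {}"
    using kW by blast
  have XW: "X \<subseteq> W" using X(1) unfolding independent_set_def by auto
  have XZ: "X \<inter> Z = {}" using X(3) XW WV unfolding Za_def Zb_def by blast
  have XN: "\<And>y. y \<in> X \<Longrightarrow> \<not> E r y \<and> \<not> E y r"
  proof -
    fix y assume y: "y \<in> X"
    have "y \<in> V" using y XW WV by auto
    then have "\<not> E r y" using X(3) y unfolding N_def by blast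
    moreover have "\<not> E y r" using sym \<open>\<not> E r y\<close> by blast
    ultimately show "\<not> E r y \<and> \<not> E y r" by blast
  qed
  have rX: "r \<notin> X" using XW unfolding W_def by auto
  have fX: "finite X" using XW fW finite_subset by blast
  have "independent_set (V - Z) E (insert r X)"
    using X(1) XW XZ XN rV rZ irr unfolding independent_set_def W_def by auto
  then have "card (insert r X) \<le> alpha (V - Z) E" using indep_card_le fin by blast
  then show False using rX fX X(2) ak h1 \<alpha>_def by simp
qed

theorem lemma8:
  fixes V :: "'a set" and E :: "'a \<Rightarrow> 'a \<Rightarrow> bool" and r :: 'a and Z :: "'a set"
  assumes "is_tree V E" and "r \<in> V"
  shows "(alpha V E > alpha (V - Z) E \<and> alpha_critical V E r \<longrightarrow>
            (\<exists>u\<in>Z \<inter> V. \<exists>v\<in>Z \<inter> V. alpha V E > alpha (V - {u, v}) E \<and> alpha_critical (V - {u, v}) E r)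
          \<or> (\<exists>u\<in>Z \<inter> V. alpha V E > alpha (V - {u}) E \<and> \<not> alpha_critical (V - {u}) E r))
       \<and> (alpha V E = alpha (V - Z) E \<and> alpha_critical (V - Z) E r \<and> \<not> alpha_critical V E r \<longrightarrow>
            (\<exists>u\<in>Z \<inter> V. alpha_critical (V - {u}) E r))"
proof -
  have fin: "finite V" and sym: "\<forall>x y. E x y \<longrightarrow> E y x" and irr: "\<forall>x. \<not> E x x"
    and ac: "\<nexists>c. is_cycle V E c"
    using assms(1) unfolding is_tree_def simple_graph_def by auto
  obtain A0 where A0: "\<forall>x\<in>V. \<forall>y\<in>V. E x y \<longrightarrow> (x \<in> A0 \<longleftrightarrow> y \<notin> A0)"
    using forest_bipartite[OF fin sym irr ac] by blast
  define A where "A = (if r \<in> A0 then A0 else - A0)"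
  have bip: "\<forall>x\<in>V. \<forall>y\<in>V. E x y \<longrightarrow> (x \<in> A \<longleftrightarrow> y \<notin> A)"
    using A0 unfolding A_def by auto
  have rA: "r \<in> A" unfolding A_def by auto
  show ?thesis
    using partA[OF fin bip rA sym irr] partB[OF fin bip rA] by blast
qed

end
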